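(* Assume the setting and standing assumptions described in the context, and let $d>0$ be such that $\Xi\subset\Omega_d=\{z\in\mathbb{R}^{2n}:|z|<d\}$. Let $p\ge1$, $\epsilon>0$, and let $\delta_0,\dots,\delta_p\in\mathbb{R}$ satisfy: (1) $\mathcal{L}_F^p\phi(z)\le\sum_{i=0}^{p-1}\delta_i\mathcal{L}_F^i\phi(z)+\delta_p$ for all $z\in\Omega_d$; (2) $\delta_0\phi((x,0))+\delta_p\ge\epsilon$ for all $x\in\mathrm{Z}$; (3) $\delta_i\ge0$ for $i=0,\dots,p$. Let $r>0$ be such that $D=\{x\in\mathbb{R}^n:|x|=r\}\subset\mathrm{Z}$. Let $A$ be the $(p+1)\times(p+1)$ matrix with $A_{k,k+1}=1$ for $k=1,\dots,p-1$, $p$-th row $(\delta_0,\dots,\delta_{p-1},1)$, last row zero and all other entries zero; let $C=(1,0,\dots,0)$. For $x\in\mathbb{R}^n\setminus\{0\}$ and $t\ge0$ define $$\mu(x,t)=C\Big(\tfrac{|x|}{r}\Big)^{\theta+1}e^{A(\frac{|x|}{r})^{\alpha}t}\begin{bmatrix}\phi\big((r\tfrac{x}{|x|},0)\big)\\ \max\big(\mathcal{L}_F\phi((r\tfrac{x}{|x|},0)),0\big)\\ \vdots\\ \max\big(\mathcal{L}_F^{p-1}\phi((r\tfrac{x}{|x|},0)),0\big)\\ \delta_p\end{bmatrix}.$$ Then $\mu$ satisfies: (a) $\mu(x,0)<0$ for all $x\ne0$; (b) $\mu(x,t)\ge\phi(\xi(t;x))$ for all $t\in[0,\tau(x)]$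 and all $x\neq0$; (c) $\mu(\lambda x,t)=\lambda^{\theta+1}\mu(x,\lambda^\alpha t)$ for all $t,\lambda>0$, $x\ne0$; (d) for every $x\ne0$ there exists a unique $\tau_x$ with $\mu(x,\tau_x)=0$.
   Context: Let $f:\mathbb{R}^n\times\mathbb{R}^m\to\mathbb{R}^n$ and a feedback law $\upsilon:\mathbb{R}^n\to\mathbb{R}^m$ be given. Define $F:\mathbb{R}^{2n}\to\mathbb{R}^{2n}$ by $F(z,e)=\big(f(z,\upsilon(z+e)),\,-f(z,\upsilon(z+e))\big)$. For $x\in\mathbb{R}^n$, $\xi(t;x)$ denotes the solution of $\dot\xi=F(\xi)$ with $\xi(0;x)=(x,0)$. A triggering function $\phi:\mathbb{R}^{2n}\to\mathbb{R}$ is given, and $\tau(x)=\inf\{t>0:\phi(\xi(t;x))=0\}$. $\mathcal{L}_F^k\phi$ denotes the $k$-th Lie derivative of $\phi$ along $F$ ($\mathcal{L}_F^0\phi=\phi$). Standing assumptions: (i) $F$ is smooth and homogeneous of degree $\alpha\ge1$ with all weights $1$, i.e. $F(\lambda\xi)=\lambda^{\alpha+1}F(\xi)$ for all $\lambda>0$; (ii) $\phi$ is smooth and homogeneous of degree $\theta\ge1$ with weights $1$, i.e. $\phi(\lambda\xi)=\lambda^{\theta+1}\phi(\xi)$ for all $\lambda>0$; (iii) for every $x\ne0$, $\phi((x,0))<0$ and there exists $t_x\in(0,\infty)$ with $\phi(\xi(t_x;x))=0$; (iv) compact sets $\mathrm{Z}\subset\mathbb{R}^n$, $\Xi\subset\mathbb{R}^{2n}$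 containing a neighbourhood of the origin are given such that for all $x\in\mathrm{Z}$, $t\ge0$: $\phi(\xi(t;x))\le0\Rightarrow\xi(t;x)\in\Xi$; (v) the origin is the only equilibrium of $\dot\zeta=f(\zeta,\upsilon(\zeta))$. *)

theory Defs
  imports "HOL-Analysis.Analysis"
begin

text \<open>C^k: C^0 = continuous; C^(k+1) = differentiable everywhere and every
  directional derivative map  x \<mapsto> Dg(x) v  is C^k (in finite dimension
  this is the same as Dg being C^k).\<close>
fun Ck :: "nat \<Rightarrow> ('a::real_normed_vector \<Rightarrow> 'b::real_normed_vector) \<Rightarrow> bool" where
  "Ck 0 g = continuous_on UNIV g"
| "Ck (Suc k) g = ((\<forall>x. g differentiable (at x)) \<and>
                    (\<forall>v. Ck k (\<lambda>x. frechet_derivative g (at x) v)))"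

definition smooth_fun :: "('a::real_normed_vector \<Rightarrow> 'b::real_normed_vector) \<Rightarrow> bool" where
  "smooth_fun g \<longleftrightarrow> (\<forall>k. Ck k g)"

definition Fvf :: "(real^'n \<Rightarrow> real^'m \<Rightarrow> real^'n) \<Rightarrow> (real^'n \<Rightarrow> real^'m)
                   \<Rightarrow> ((real^'n) \<times> (real^'n)) \<Rightarrow> ((real^'n) \<times> (real^'n))" where
  "Fvf f u = (\<lambda>(z, e). (f z (u (z + e)), - f z (u (z + e))))"

fun lie :: "('a::real_normed_vector \<Rightarrow> 'a) \<Rightarrow> ('a \<Rightarrow> real) \<Rightarrow> nat \<Rightarrow> 'a \<Rightarrow> real" where
  "lie F phi 0 = phi"
| "lie F phi (Suc k) = (\<lambda>z. frechet_derivative (lie F phi k) (at z) (F z))"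

definition mat_mul :: "nat \<Rightarrow> (nat \<Rightarrow> nat \<Rightarrow> real) \<Rightarrow> (nat \<Rightarrow> nat \<Rightarrow> real) \<Rightarrow> nat \<Rightarrow> nat \<Rightarrow> real" where
  "mat_mul N X Y = (\<lambda>i j. \<Sum>k<N. X i k * Y k j)"

fun mat_pow :: "nat \<Rightarrow> (nat \<Rightarrow> nat \<Rightarrow> real) \<Rightarrow> nat \<Rightarrow> nat \<Rightarrow> nat \<Rightarrow> real" where
  "mat_pow N X 0 = (\<lambda>i j. if i = j then 1 else 0)"
| "mat_pow N X (Suc k) = mat_mul N (mat_pow N X k) X"

definition mat_exp :: "nat \<Rightarrow> (nat \<Rightarrow> nat \<Rightarrow> real) \<Rightarrow> nat \<Rightarrow> nat \<Rightarrow> real" where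
  "mat_exp N X = (\<lambda>i j. \<Sum>k. mat_pow N X k i j / fact k)"

text \<open>The (p+1)x(p+1) matrix A, 0-based indices 0..p: A(k,k+1) = 1 for k = 0..p-2,
  row p-1 is (delta_0, ..., delta_(p-1), 1), last row (index p) zero.\<close>
definition Amat :: "(nat \<Rightarrow> real) \<Rightarrow> nat \<Rightarrow> nat \<Rightarrow> nat \<Rightarrow> real" where
  "Amat \<delta> p = (\<lambda>i j.
     if i + 1 < p \<and> j = i + 1 then 1
     else if i + 1 = p \<and> j < p then \<delta> j
     else if i + 1 = p \<and> j = p then 1
     else 0)"

definition w0 :: "(((real^'n) \<times> (real^'n)) \<Rightarrow> ((real^'n) \<times> (real^'n))) \<Rightarrow> (((real^'n) \<times> (real^'n)) \<Rightarrow> real)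
                  \<Rightarrow> (nat \<Rightarrow> real) \<Rightarrow> nat \<Rightarrow> real \<Rightarrow> real^'n \<Rightarrow> nat \<Rightarrow> real" where
  "w0 F phi \<delta> p r x = (\<lambda>j.
     let y = ((r / norm x) *\<^sub>R x, 0) in
     if j = 0 then phi y
     else if j < p then max (lie F phi j y) 0
     else \<delta> p)"

definition mu :: "(((real^'n) \<times> (real^'n)) \<Rightarrow> ((real^'n) \<times> (real^'n))) \<Rightarrow> (((real^'n) \<times> (real^'n)) \<Rightarrow> real)
                  \<Rightarrow> real \<Rightarrow> real \<Rightarrow> (nat \<Rightarrow> real) \<Rightarrow> nat \<Rightarrow> real \<Rightarrow> real^'n \<Rightarrow> real \<Rightarrow> real" where
  "mu F phi \<alpha> \<theta> \<delta> p r x t =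
     (let s = norm x / r;
          E = mat_exp (p + 1) (\<lambda>i j. (s powr \<alpha> * t) * Amat \<delta> p i j)
      in s powr (\<theta> + 1) * (\<Sum>j\<le>p. E 0 j * w0 F phi \<delta> p r x j))"

definition tau_ev :: "(real^'n \<Rightarrow> real \<Rightarrow> ((real^'n) \<times> (real^'n))) \<Rightarrow> (real^'n \<Rightarrow> ereal)
                      \<Rightarrow> (((real^'n) \<times> (real^'n)) \<Rightarrow> real) \<Rightarrow> real^'n \<Rightarrow> real" where
  "tau_ev xi T phi x = Inf {t. 0 < t \<and> ereal t < T x \<and> phi (xi x t) = 0}"

end

theory Submission
  imports Defs
begin


lemma Ck_Suc_imp: "Ck (Suc k) g \<Longrightarrow> Ck k g"
proof (induction k arbitrary: g)
  case 0
  then show ?case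
    by (auto intro!: continuous_at_imp_continuous_on differentiable_imp_continuous_within)
next
  case (Suc k)
  from Suc.prems have "\<forall>x. g differentiable (at x)" "\<forall>v. Ck (Suc k) (\<lambda>x. frechet_derivative g (at x) v)"
    by simp_all
  moreover have "Ck k (\<lambda>x. frechet_derivative g (at x) v)" for v
    using Suc.IH calculation(2) by blast
  ultimately show ?case by simp
qed

lemma Ck_add: "Ck k f \<Longrightarrow> Ck k g \<Longrightarrow> Ck k (\<lambda>x. f x + g x)"
proof (induction k arbitrary: f g)
  case 0
  then show ?case by (auto intro: continuous_on_add)
next
  case (Suc k)
  have D: "frechet_derivative (\<lambda>x. f x + g x) (at x) = (\<lambda>v. frechet_derivative f (at x) v + frechet_derivative g (at x) v)" for x
    using Suc.prems by (intro frechet_derivative_at[symmetric] has_derivative_add) (auto simp: frechet_derivative_works)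
  have "Ck k (\<lambda>x. frechet_derivative (\<lambda>x. f x + g x) (at x) v)" for v
  proof -
    have a: "Ck k (\<lambda>x. frechet_derivative g (at x) v)" "Ck k (\<lambda>x. frechet_derivative f (at x) v)"
      using Suc.prems by simp_all
    show ?thesis unfolding D by (rule Suc.IH) (use a in auto)
  qed
  moreover have "g differentiable (at x)" "f differentiable (at x)" for x using Suc.prems by simp_all
  ultimately show ?case by (simp add: differentiable_add)
qed

lemma Ck_const: "Ck k (\<lambda>x::'a::real_normed_vector. c::'b::real_normed_vector)"
proof (induction k arbitrary: c)
  case (Suc k)
  have "Ck k (\<lambda>x::'a. frechet_derivative (\<lambda>x. c) (at x) v)" for v using Suc.IH by simp
  then show ?case by simp
qed simp

lemma Ck_sum: "finite I \<Longrightarrow> (\<And>i. i \<in> I \<Longrightarrow> Ck k (f i)) \<Longrightarrow> Ck k (\<lambda>x. \<Sum>i\<in>I. f i x)"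
  by (induction I rule: finite_induct) (auto intro: Ck_add Ck_const)

lemma Ck_mult: "Ck k (f::'a::real_normed_vector \<Rightarrow> real) \<Longrightarrow> Ck k g \<Longrightarrow> Ck k (\<lambda>x. f x * g x)"
proof (induction k arbitrary: f g)
  case 0
  then show ?case by (auto intro: continuous_on_mult)
next
  case (Suc k)
  have D: "frechet_derivative (\<lambda>x. f x * g x) (at x) = (\<lambda>v. f x * frechet_derivative g (at x) v + frechet_derivative f (at x) v * g x)" for x
    using Suc.prems by (intro frechet_derivative_at[symmetric] has_derivative_mult) (auto simp: frechet_derivative_works)
  have "Ck k f" "Ck k g" using Suc.prems Ck_Suc_imp by blast+
  moreover have "Ck k (\<lambda>x. frechet_derivative (\<lambda>x. f x * g x) (at x) v)" for v
  proof -
    have a: "Ck k (\<lambda>x. frechet_derivative g (at x) v)" "Ck k (\<lambda>x. frechet_derivative f (at x) v)"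
      using Suc.prems by simp_all
    show ?thesis unfolding D
      by (rule Ck_add; rule Suc.IH) (use a calculation in auto)
  qed
  moreover have "g differentiable (at x)" "f differentiable (at x)" for x using Suc.prems by simp_all
  ultimately show ?case by (simp add: differentiable_mult)
qed

lemma Ck_lin: "bounded_linear L \<Longrightarrow> Ck k F \<Longrightarrow> Ck k (\<lambda>x. L (F x))"
proof (induction k arbitrary: F)
  case 0
  have "continuous_on UNIV L" using 0 by (simp add: linear_continuous_on)
  then show ?case using 0 by (simp add: continuous_on_compose2[of UNIV L UNIV F])
next
  case (Suc k)
  have dF: "F differentiable (at x)" for x using Suc.prems by simp
  have D: "frechet_derivative (\<lambda>x. L (F x)) (at x) = (\<lambda>v. L (frechet_derivative F (at x) v))" for x
  proof (rule frechet_derivative_at[symmetric])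
    show "((\<lambda>x. L (F x)) has_derivative (\<lambda>v. L (frechet_derivative F (at x) v))) (at x)"
      using bounded_linear.has_derivative[OF Suc.prems(1) dF[unfolded frechet_derivative_works]] .
  qed
  have "Ck k (\<lambda>x. frechet_derivative F (at x) v)" for v using Suc.prems by simp
  then have "Ck k (\<lambda>x. frechet_derivative (\<lambda>x. L (F x)) (at x) v)" for v
    unfolding D by (rule Suc.IH[OF Suc.prems(1)])
  moreover have "(\<lambda>x. L (F x)) differentiable (at x)" for x
    using D dF frechet_derivative_works
    by (metis bounded_linear.has_derivative Suc.prems(1) differentiableI)
  ultimately show ?case by simp
qed

lemma lie_expand:
  fixes g :: "'a::euclidean_space \<Rightarrow> real"
  assumes "g differentiable (at z)"
  shows "frechet_derivative g (at z) w = (\<Sum>b\<in>Basis. (w \<bullet> b) * frechet_derivative g (at z) b)"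
proof -
  have l: "linear (frechet_derivative g (at z))" using assms by (rule linear_frechet_derivative)
  have "frechet_derivative g (at z) w = frechet_derivative g (at z) (\<Sum>b\<in>Basis. (w \<bullet> b) *\<^sub>R b)"
    by (simp add: euclidean_representation)
  also have "\<dots> = (\<Sum>b\<in>Basis. (w \<bullet> b) * frechet_derivative g (at z) b)"
    by (simp add: linear_sum[OF l] linear_cmul[OF l])
  finally show ?thesis .
qed

lemma lie_smooth:
  fixes F :: "'a::euclidean_space \<Rightarrow> 'a"
  assumes "smooth_fun F" "smooth_fun phi"
  shows "smooth_fun (lie F phi k)"
proof (induction k)
  case 0
  then show ?case using assms by simp
next
  case (Suc k)
  have d: "lie F phi k differentiable (at z)" for z
  proof -
    have "Ck (Suc 0) (lie F phi k)" using Suc unfolding smooth_fun_def by blast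
    then show ?thesis by simp
  qed
  have eq: "lie F phi (Suc k) = (\<lambda>z. \<Sum>b\<in>Basis. (F z \<bullet> b) * frechet_derivative (lie F phi k) (at z) b)"
  proof
    fix z show "lie F phi (Suc k) z = (\<Sum>b\<in>Basis. (F z \<bullet> b) * frechet_derivative (lie F phi k) (at z) b)"
      unfolding lie.simps by (rule lie_expand[OF d])
  qed
  show ?case unfolding smooth_fun_def eq
  proof
    fix m
    show "Ck m (\<lambda>z. \<Sum>b\<in>Basis. (F z \<bullet> b) * frechet_derivative (lie F phi k) (at z) b)"
    proof (intro Ck_sum Ck_mult)
      fix b :: 'a
      show "Ck m (\<lambda>z. F z \<bullet> b)" using assms(1) unfolding smooth_fun_def
        by (intro Ck_lin[where L="\<lambda>y. y \<bullet> b"]) (auto intro: bounded_linear_inner_left)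
      show "Ck m (\<lambda>z. frechet_derivative (lie F phi k) (at z) b)"
      proof -
        have "Ck (Suc m) (lie F phi k)" using Suc unfolding smooth_fun_def by blast
        then show ?thesis by simp
      qed
    qed auto
  qed
qed

lemma lie_diff:
  fixes F :: "'a::euclidean_space \<Rightarrow> 'a"
  assumes "smooth_fun F" "smooth_fun phi"
  shows "lie F phi k differentiable (at z)"
proof -
  have "Ck (Suc 0) (lie F phi k)" using lie_smooth[OF assms, of k] unfolding smooth_fun_def by blast
  then show ?thesis by simp
qed



lemma C1_lipschitz:
  fixes F :: "'a::euclidean_space \<Rightarrow> 'b::real_normed_vector"
  assumes "Ck (Suc 0) F"
  shows "\<exists>L\<ge>0. \<forall>x\<in>cball 0 R. \<forall>y\<in>cball 0 R. norm (F x - F y) \<le> L * norm (x - y)"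
proof -
  have dF: "F differentiable (at x)" for x using assms by simp
  have cD: "continuous_on UNIV (\<lambda>x. frechet_derivative F (at x) v)" for v using assms by simp
  define G where "G x = (\<Sum>b\<in>Basis. norm (frechet_derivative F (at x) b))" for x
  have cG: "continuous_on (cball 0 R) G" unfolding G_def
    by (intro continuous_intros continuous_on_subset[OF cD]) auto
  obtain B where B: "\<And>x. x \<in> cball 0 R \<Longrightarrow> G x \<le> B"
    using compact_imp_bounded[OF compact_continuous_image[OF cG compact_cball]]
    unfolding bounded_iff by (metis abs_le_D1 image_eqI real_norm_def)
  define L where "L = max B 0"
  have bnd: "norm (frechet_derivative F (at x) h) \<le> L * norm h" if "x \<in> cball 0 R" for x h
  proof -
    have l: "linear (frechet_derivative F (at x))" using dF by (rule linear_frechet_derivative)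
    have "frechet_derivative F (at x) h = frechet_derivative F (at x) (\<Sum>b\<in>Basis. (h \<bullet> b) *\<^sub>R b)"
      by (simp add: euclidean_representation)
    also have "\<dots> = (\<Sum>b\<in>Basis. (h \<bullet> b) *\<^sub>R frechet_derivative F (at x) b)"
      by (simp add: linear_sum[OF l] linear_cmul[OF l])
    finally have "norm (frechet_derivative F (at x) h) \<le> (\<Sum>b\<in>Basis. norm ((h \<bullet> b) *\<^sub>R frechet_derivative F (at x) b))"
      by (metis norm_sum)
    also have "\<dots> \<le> (\<Sum>b\<in>Basis. norm h * norm (frechet_derivative F (at x) b))"
      by (intro sum_mono) (auto intro!: mult_right_mono simp: Basis_le_norm)
    also have "\<dots> = norm h * G x" by (simp add: G_def sum_distrib_left)
    also have "\<dots> \<le> norm h * L" using B[OF that] by (intro mult_left_mono) (auto simp: L_def)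
    finally show ?thesis by (simp add: mult.commute)
  qed
  show ?thesis
  proof (intro exI[of _ L] conjI ballI)
    show "0 \<le> L" by (simp add: L_def)
    fix x y :: 'a assume xy: "x \<in> cball 0 R" "y \<in> cball 0 R"
    show "norm (F x - F y) \<le> L * norm (x - y)"
    proof (rule differentiable_bound[OF convex_cball _ _ xy])
      fix z assume "z \<in> cball (0::'a) R"
      show "(F has_derivative frechet_derivative F (at z)) (at z within cball 0 R)"
        using dF frechet_derivative_works has_derivative_at_withinI by blast
      show "onorm (frechet_derivative F (at z)) \<le> L"
        using bnd[OF \<open>z \<in> cball 0 R\<close>] by (intro onorm_le) auto
    qed
  qed
qed

lemma ode_unique:
  fixes F :: "'a::euclidean_space \<Rightarrow> 'a"
  assumes F1: "Ck (Suc 0) F" and b: "0 \<le> b"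
    and d1: "\<And>t. t \<in> {0..b} \<Longrightarrow> (x1 has_vector_derivative F (x1 t)) (at t within {0..b})"
    and d2: "\<And>t. t \<in> {0..b} \<Longrightarrow> (x2 has_vector_derivative F (x2 t)) (at t within {0..b})"
    and i: "x1 0 = x2 0"
  shows "x1 b = x2 b"
proof -
  have c1: "continuous_on {0..b} x1" using d1
    by (meson continuous_on_eq_continuous_within has_vector_derivative_continuous)
  have c2: "continuous_on {0..b} x2" using d2
    by (meson continuous_on_eq_continuous_within has_vector_derivative_continuous)
  obtain R1 where R1: "\<And>t. t \<in> {0..b} \<Longrightarrow> norm (x1 t) \<le> R1"
    using compact_imp_bounded[OF compact_continuous_image[OF c1 compact_Icc]]
    unfolding bounded_iff by (meson image_eqI)
  obtain R2 where R2: "\<And>t. t \<in> {0..b} \<Longrightarrow> norm (x2 t) \<le> R2"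
    using compact_imp_bounded[OF compact_continuous_image[OF c2 compact_Icc]]
    unfolding bounded_iff by (meson image_eqI)
  define R where "R = max R1 R2"
  obtain L where L: "L \<ge> 0" "\<And>x y. x\<in>cball 0 R \<Longrightarrow> y\<in>cball 0 R \<Longrightarrow> norm (F x - F y) \<le> L * norm (x - y)"
    using C1_lipschitz[OF F1, of R] by blast
  define d where "d t = x1 t - x2 t" for t
  define w where "w t = d t \<bullet> d t" for t
  define h where "h t = exp (- 2 * L * t) * w t" for t
  define h' where "h' t = exp (- 2 * L * t) * (2 * (d t \<bullet> (F (x1 t) - F (x2 t))) - 2 * L * w t)" for t
  have dd: "(d has_vector_derivative (F (x1 t) - F (x2 t))) (at t within {0..b})" if "t \<in> {0..b}" for t
    unfolding d_def using d1[OF that] d2[OF that] by (intro derivative_intros)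
  have dw: "(w has_real_derivative 2 * (d t \<bullet> (F (x1 t) - F (x2 t)))) (at t within {0..b})" if "t \<in> {0..b}" for t
  proof -
    have "(w has_derivative (\<lambda>s. d t \<bullet> (s *\<^sub>R (F (x1 t) - F (x2 t))) + (s *\<^sub>R (F (x1 t) - F (x2 t))) \<bullet> d t)) (at t within {0..b})"
      unfolding w_def using dd[OF that] unfolding has_vector_derivative_def
      by (intro has_derivative_inner)
    then show ?thesis unfolding has_field_derivative_def
      by (rule has_derivative_eq_rhs) (auto simp: fun_eq_iff inner_commute algebra_simps)
  qed
  have dh: "(h has_real_derivative h' t) (at t within {0..b})" if "t \<in> {0..b}" for t
    unfolding h_def h'_def
    by (rule derivative_eq_intros dw[OF that] refl)+ (simp add: algebra_simps)
  have h'_le: "h' t \<le> 0" if "t \<in> {0..b}" for t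
  proof -
    have inb: "x1 t \<in> cball 0 R" "x2 t \<in> cball 0 R" using R1[OF that] R2[OF that] by (auto simp: R_def)
    have "d t \<bullet> (F (x1 t) - F (x2 t)) \<le> norm (d t) * norm (F (x1 t) - F (x2 t))"
      by (rule norm_cauchy_schwarz)
    also have "\<dots> \<le> norm (d t) * (L * norm (d t))"
      using L(2)[OF inb] by (intro mult_left_mono) (auto simp: d_def)
    also have "\<dots> = L * w t" by (simp add: w_def power2_norm_eq_inner[symmetric] power2_eq_square)
    finally have "2 * (d t \<bullet> (F (x1 t) - F (x2 t))) - 2 * L * w t \<le> 0" by simp
    then show ?thesis unfolding h'_def by (simp add: mult_nonneg_nonpos)
  qed
  obtain z where z: "z \<in> {0..b}" "h b - h 0 = h' z * (b - 0)"
  proof -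
    have "\<exists>x\<in>{0..b}. h b - h 0 = h' x * (b - 0)"
      using mvt_very_simple[OF b, of h "\<lambda>t s. h' t * s"] dh
      unfolding has_field_derivative_def by auto
    then show ?thesis using that by blast
  qed
  have "h 0 = 0" by (simp add: h_def w_def d_def i)
  then have "h b \<le> 0" using z h'_le[OF z(1)] b by (simp add: mult_nonpos_nonneg)
  then have "w b \<le> 0" unfolding h_def by (simp add: mult_le_0_iff)
  then have "d b = 0" unfolding w_def by (metis inner_gt_zero_iff not_le)
  then show ?thesis by (simp add: d_def)
qed



lemma mat_pow_scale: "mat_pow N (\<lambda>i j. c * X i j) k = (\<lambda>i j. c ^ k * mat_pow N X k i j)"
  by (induction k) (auto simp: mat_mul_def fun_eq_iff sum_distrib_left algebra_simps)

lemma mat_pow_bound: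
  assumes "\<And>i j. \<bar>X i j\<bar> \<le> M" "0 \<le> M"
  shows "\<bar>mat_pow N X k i j\<bar> \<le> (real N * M) ^ k"
proof (induction k arbitrary: i j)
  case 0 then show ?case by simp
next
  case (Suc k)
  have "\<bar>mat_pow N X (Suc k) i j\<bar> \<le> (\<Sum>l<N. \<bar>mat_pow N X k i l * X l j\<bar>)"
    by (simp add: mat_mul_def sum_abs)
  also have "\<dots> \<le> (\<Sum>l<N. (real N * M) ^ k * M)"
    by (intro sum_mono) (auto simp: abs_mult intro!: mult_mono Suc.IH assms zero_le_power mult_nonneg_nonneg)
  also have "\<dots> = (real N * M) ^ Suc k" by simp
  finally show ?case .
qed

lemma mat_pow_left:
  assumes "i < N" "j < N"
  shows "mat_pow N X (Suc k) i j = (\<Sum>l<N. X i l * mat_pow N X k l j)"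
  using assms
proof (induction k arbitrary: i j)
  case 0
  have a: "(\<Sum>l<N. (if i = l then 1 else 0) * X l j) = X i j"
  proof -
    have "(\<lambda>l. (if i = l then 1 else 0) * X l j) = (\<lambda>l. if l = i then X l j else 0)" by auto
    then show ?thesis using 0 by (simp only:) (simp add: sum.delta)
  qed
  have b: "(\<Sum>l<N. X i l * (if l = j then 1 else 0)) = X i j"
  proof -
    have "(\<lambda>l. X i l * (if l = j then 1 else 0)) = (\<lambda>l. if l = j then X i l else 0)" by auto
    then show ?thesis using 0 by (simp only:) (simp add: sum.delta)
  qed
  show ?case using a b by (simp add: mat_mul_def)
next
  case (Suc k)
  have "mat_pow N X (Suc (Suc k)) i j = (\<Sum>m<N. mat_pow N X (Suc k) i m * X m j)"
    by (simp add: mat_mul_def)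
  also have "\<dots> = (\<Sum>m<N. (\<Sum>l<N. X i l * mat_pow N X k l m) * X m j)"
    using Suc.prems Suc.IH by (intro sum.cong refl) (simp del: mat_pow.simps)
  also have "\<dots> = (\<Sum>l<N. X i l * (\<Sum>m<N. mat_pow N X k l m * X m j))"
    by (simp add: sum_distrib_left sum_distrib_right mult.assoc) (rule sum.swap)
  also have "\<dots> = (\<Sum>l<N. X i l * mat_pow N X (Suc k) l j)"
    by (simp add: mat_mul_def)
  finally show ?case .
qed

definition coef :: "nat \<Rightarrow> (nat \<Rightarrow> nat \<Rightarrow> real) \<Rightarrow> nat \<Rightarrow> nat \<Rightarrow> nat \<Rightarrow> real" where
  "coef N X i j n = mat_pow N X n i j / fact n"

lemma mat_exp_series: "mat_exp N (\<lambda>a b. t * X a b) i j = (\<Sum>n. coef N X i j n * t ^ n)"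
  by (simp add: mat_exp_def mat_pow_scale coef_def mult.commute)

lemma coef_summable:
  assumes "\<And>i j. \<bar>X i j\<bar> \<le> M" "0 \<le> M"
  shows "summable (\<lambda>n. coef N X i j n * t ^ n)"
proof (rule summable_comparison_test)
  show "summable (\<lambda>n. inverse (fact n) * (real N * M * \<bar>t\<bar>) ^ n)" by (rule summable_exp)
  show "\<exists>N'. \<forall>n\<ge>N'. norm (coef N X i j n * t ^ n) \<le> inverse (fact n) * (real N * M * \<bar>t\<bar>) ^ n"
  proof (intro exI allI impI)
    fix n :: nat
    have "norm (coef N X i j n * t ^ n) = \<bar>mat_pow N X n i j\<bar> * \<bar>t\<bar> ^ n / fact n"
      by (simp add: coef_def abs_mult power_abs)
    also have "\<dots> \<le> (real N * M) ^ n * \<bar>t\<bar> ^ n / fact n"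
      by (intro divide_right_mono mult_right_mono mat_pow_bound assms) auto
    also have "\<dots> = inverse (fact n) * (real N * M * \<bar>t\<bar>) ^ n"
      by (simp add: power_mult_distrib field_simps)
    finally show "norm (coef N X i j n * t ^ n) \<le> inverse (fact n) * (real N * M * \<bar>t\<bar>) ^ n" .
  qed
qed

lemma mat_exp_deriv:
  assumes "\<And>i j. \<bar>X i j\<bar> \<le> M" "0 \<le> M" and ij: "i < N" "j < N"
  shows "((\<lambda>t. mat_exp N (\<lambda>a b. t * X a b) i j) has_real_derivative
            (\<Sum>l<N. X i l * mat_exp N (\<lambda>a b. t * X a b) l j)) (at t)"
proof -
  have "((\<lambda>t. \<Sum>n. coef N X i j n * t ^ n) has_real_derivative (\<Sum>n. diffs (coef N X i j) n * t ^ n)) (at t)"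
    by (rule termdiffs_strong_converges_everywhere) (rule coef_summable[OF assms(1,2)])
  moreover have "(\<Sum>n. diffs (coef N X i j) n * t ^ n) = (\<Sum>l<N. X i l * (\<Sum>n. coef N X l j n * t ^ n))"
  proof -
    have "diffs (coef N X i j) n * t ^ n = (\<Sum>l<N. X i l * (coef N X l j n * t ^ n))" for n
    proof -
      have "diffs (coef N X i j) n = real (Suc n) * (mat_pow N X (Suc n) i j / (real (Suc n) * fact n))"
        by (simp add: diffs_def coef_def del: mat_pow.simps of_nat_Suc)
      also have "\<dots> = mat_pow N X (Suc n) i j / fact n"
        by (simp del: mat_pow.simps of_nat_Suc)
      finally have "diffs (coef N X i j) n = mat_pow N X (Suc n) i j / fact n" .
      then show ?thesis
        by (simp add: mat_pow_left[OF ij] coef_def sum_distrib_right sum_divide_distrib mult.assoc del: mat_pow.simps)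
    qed
    then have "(\<Sum>n. diffs (coef N X i j) n * t ^ n) = (\<Sum>n. \<Sum>l<N. X i l * (coef N X l j n * t ^ n))"
      by simp
    also have "\<dots> = (\<Sum>l<N. \<Sum>n. X i l * (coef N X l j n * t ^ n))"
      by (rule suminf_sum) (intro summable_mult coef_summable[OF assms(1,2)])
    also have "\<dots> = (\<Sum>l<N. X i l * (\<Sum>n. coef N X l j n * t ^ n))"
        by (intro sum.cong refl) (rule suminf_mult, rule coef_summable[OF assms(1,2)])
    finally show ?thesis .
  qed
  ultimately show ?thesis by (simp add: mat_exp_series)
qed

lemma mat_exp_zero: "mat_exp N (\<lambda>a b. 0 * X a b) i j = (if i = j then 1 else 0)"
proof -
  have "mat_exp N (\<lambda>a b. 0 * X a b) i j = (\<Sum>n. coef N X i j n * 0 ^ n)" by (rule mat_exp_series)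
  also have "\<dots> = coef N X i j 0" by (rule powser_zero)
  finally show ?thesis by (simp add: coef_def)
qed



lemma comp_step:
  fixes e e' :: "nat \<Rightarrow> real \<Rightarrow> real"
  assumes p: "p \<ge> 1" and ab: "a \<le> b" and K: "K \<ge> 1" "(\<Sum>j<p. \<delta> j) \<le> K"
    and hK: "real p * (b - a) * K \<le> 1 / 2"
    and deriv: "\<And>i t. i < p \<Longrightarrow> t \<in> {a..b} \<Longrightarrow> (e i has_real_derivative e' i t) (at t within {a..b})"
    and chain: "\<And>i t. i + 1 < p \<Longrightarrow> t \<in> {a..b} \<Longrightarrow> e' i t = e (i + 1) t"
    and last: "\<And>t. t \<in> {a..b} \<Longrightarrow> e' (p - 1) t \<ge> (\<Sum>j<p. \<delta> j * e j t)"
    and dpos: "\<And>j. j < p \<Longrightarrow> \<delta> j \<ge> 0"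
    and init: "\<And>i. i < p \<Longrightarrow> e i a \<ge> 0"
  shows "\<And>i t. i < p \<Longrightarrow> t \<in> {a..b} \<Longrightarrow> e i t \<ge> 0"
proof -
  define \<Phi> where "\<Phi> s = (\<Sum>i<p. max (- e i s) 0)" for s
  have ce: "continuous_on {a..b} (e i)" if "i < p" for i
    using deriv[OF that] by (meson continuous_on_eq_continuous_within DERIV_continuous)
  have c\<Phi>: "continuous_on {a..b} \<Phi>" unfolding \<Phi>_def
    by (intro continuous_intros ce) auto
  obtain s0 where s0: "s0 \<in> {a..b}" "\<And>s. s \<in> {a..b} \<Longrightarrow> \<Phi> s \<le> \<Phi> s0"
    using continuous_attains_sup[OF compact_Icc _ c\<Phi>] ab by auto
  define S where "S = \<Phi> s0"
  have S0: "S \<ge> 0" unfolding S_def \<Phi>_def by (intro sum_nonneg) auto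
  have eS: "e i s \<ge> - S" if "i < p" "s \<in> {a..b}" for i s
  proof -
    have "max (- e i s) 0 \<le> \<Phi> s" unfolding \<Phi>_def
      using that(1) by (intro member_le_sum[of i "{..<p}" "\<lambda>i. max (- e i s) 0"]) auto
    then show ?thesis using s0(2)[OF that(2)] unfolding S_def by linarith
  qed
  have lb: "e i s \<ge> - ((b - a) * K * S)" if ip: "i < p" and sab: "s \<in> {a..b}" for i s
  proof -
    have as: "a \<le> s" using sab by auto
    obtain z where z: "z \<in> {a..s}" "e i s - e i a = e' i z * (s - a)"
    proof -
      have d': "(e i has_derivative (\<lambda>h. e' i x * h)) (at x within {a..s})" if "a \<le> x" "x \<le> s" for x
      proof -
        have "x \<in> {a..b}" using that sab by auto
        then have "(e i has_real_derivative e' i x) (at x within {a..s})"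
          using DERIV_subset[OF deriv[OF ip \<open>x \<in> {a..b}\<close>], of "{a..s}"] sab by auto
        then show ?thesis unfolding has_field_derivative_def by simp
      qed
      have "\<exists>z\<in>{a..s}. e i s - e i a = e' i z * (s - a)"
        using mvt_very_simple[OF as, of "e i" "\<lambda>t h. e' i t * h", OF d'] by simp
      then show ?thesis using that by blast
    qed
    have zab: "z \<in> {a..b}" using z(1) sab by auto
    have "e' i z \<ge> - (K * S)"
    proof (cases "i + 1 < p")
      case True
      then have "e' i z = e (i + 1) z" using chain zab by blast
      also have "\<dots> \<ge> - S" using eS[OF True zab] .
      finally show ?thesis using K S0 by (smt (verit) mult_le_cancel_right1)
    next
      case False
      then have ip: "i = p - 1" using ip by auto
      have "(\<Sum>j<p. \<delta> j * e j z) \<ge> (\<Sum>j<p. \<delta> j * (- S))"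
        by (intro sum_mono mult_left_mono eS zab dpos) auto
      also have "(\<Sum>j<p. \<delta> j * (- S)) = - ((\<Sum>j<p. \<delta> j) * S)" by (simp add: sum_distrib_right sum_negf)
      also have "\<dots> \<ge> - (K * S)" using K S0 by (simp add: mult_right_mono)
      finally show ?thesis using last[OF zab] ip by simp
    qed
    then have "e' i z * (s - a) \<ge> - (K * S) * (s - a)" using as by (intro mult_right_mono) auto
    moreover have "(K * S) * (s - a) \<le> (K * S) * (b - a)"
      using sab K S0 by (intro mult_left_mono) auto
    ultimately show ?thesis using z(2) init[OF ip] by (simp add: algebra_simps)
  qed
  have "\<Phi> s0 \<le> (\<Sum>i<p. (b - a) * K * S)" unfolding \<Phi>_def
  proof (rule sum_mono)
    fix i assume "i \<in> {..<p}"
    then have "- ((b - a) * K * S) \<le> e i s0" using lb s0(1) by auto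
    moreover have "0 \<le> (b - a) * K * S" using S0 K ab by simp
    ultimately show "max (- e i s0) 0 \<le> (b - a) * K * S" by linarith
  qed
  also have "\<dots> = real p * (b - a) * K * S" by simp
  also have "\<dots> \<le> 1/2 * S" using hK S0 by (intro mult_right_mono) auto
  finally have "S \<le> 0" unfolding S_def by simp
  then have S00: "S = 0" using S0 by simp
  fix i t assume "i < p" "t \<in> {a..b}"
  then show "e i t \<ge> 0" using eS S00 by fastforce
qed

lemma comparison:
  fixes e e' :: "nat \<Rightarrow> real \<Rightarrow> real"
  assumes p: "p \<ge> 1"
    and deriv: "\<And>i t. i < p \<Longrightarrow> t \<in> {0..\<tau>} \<Longrightarrow> (e i has_real_derivative e' i t) (at t within {0..\<tau>})"
    and chain: "\<And>i t. i + 1 < p \<Longrightarrow> t \<in> {0..\<tau>} \<Longrightarrow> e' i t = e (i + 1) t"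
    and last: "\<And>t. t \<in> {0..\<tau>} \<Longrightarrow> e' (p - 1) t \<ge> (\<Sum>j<p. \<delta> j * e j t)"
    and dpos: "\<And>j. j < p \<Longrightarrow> \<delta> j \<ge> 0"
    and init: "\<And>i. i < p \<Longrightarrow> e i 0 \<ge> 0"
  shows "\<And>i t. i < p \<Longrightarrow> t \<in> {0..\<tau>} \<Longrightarrow> e i t \<ge> 0"
proof -
  define K where "K = 1 + (\<Sum>j<p. \<delta> j)"
  have K: "K \<ge> 1" "(\<Sum>j<p. \<delta> j) \<le> K" unfolding K_def using dpos by (auto intro: sum_nonneg)
  define h where "h = 1 / (2 * real p * K)"
  have hpos: "h > 0" unfolding h_def using K p by auto
  have hK: "real p * h * K \<le> 1/2" unfolding h_def using K p by (simp add: field_simps)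
  have P: "\<forall>t\<in>{0..\<tau>}. t \<le> real n * h \<longrightarrow> (\<forall>i<p. e i t \<ge> 0)" for n
  proof (induction n)
    case 0
    then show ?case using init by auto
  next
    case (Suc n)
    show ?case
    proof (intro ballI impI allI)
      fix t i assume t: "t \<in> {0..\<tau>}" "t \<le> real (Suc n) * h" and i: "i < p"
      show "e i t \<ge> 0"
      proof (cases "t \<le> real n * h")
        case True then show ?thesis using Suc.IH t i by blast
      next
        case False
        define a where "a = real n * h"
        have a: "0 \<le> a" "a \<le> t" "t - a \<le> h" using False hpos t unfolding a_def
          by (auto simp: algebra_simps)
        have sub: "{a..t} \<subseteq> {0..\<tau>}" using a t by auto
        show ?thesis
        proof (rule comp_step[of p a t K \<delta> e e', OF p a(2) K])
          show "real p * (t - a) * K \<le> 1 / 2"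
            using hK a(3) K p by (smt (verit) mult_le_cancel_right1 mult_right_mono of_nat_0_le_iff mult_left_mono)
          show "(e i has_real_derivative e' i s) (at s within {a..t})" if "i < p" "s \<in> {a..t}" for i s
            using deriv[OF that(1)] that(2) sub by (meson DERIV_subset subsetD)
          show "e' i s = e (i + 1) s" if "i + 1 < p" "s \<in> {a..t}" for i s
            using chain that sub by blast
          show "e' (p - 1) s \<ge> (\<Sum>j<p. \<delta> j * e j s)" if "s \<in> {a..t}" for s
            using last that sub by blast
          show "e i a \<ge> 0" if "i < p" for i
            using Suc.IH that a sub unfolding a_def by auto
        qed (use dpos i a in auto)
      qed
    qed
  qed
  fix i t assume it: "i < p" "t \<in> {0..\<tau>}"
  obtain n where "t / h \<le> real n" using real_arch_simple by blast
  then have "t \<le> real n * h" using hpos by (simp add: field_simps)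
  then show "e i t \<ge> 0" using P it by blast
qed



locale setting =
  fixes F :: "((real^'n) \<times> (real^'n)) \<Rightarrow> ((real^'n) \<times> (real^'n))"
    and phi :: "((real^'n) \<times> (real^'n)) \<Rightarrow> real"
    and \<alpha> \<theta> :: real
    and xi :: "real^'n \<Rightarrow> real \<Rightarrow> ((real^'n) \<times> (real^'n))"
    and T :: "real^'n \<Rightarrow> ereal"
    and Z :: "(real^'n) set"
    and \<Xi> :: "((real^'n) \<times> (real^'n)) set"
    and d \<epsilon> r :: real
    and p :: nat
    and \<delta> :: "nat \<Rightarrow> real"
  assumes F_smooth: "smooth_fun F"
    and F_hom: "\<And>c z. c > 0 \<Longrightarrow> F (c *\<^sub>R z) = c powr (\<alpha> + 1) *\<^sub>R F z"
    and phi_smooth: "smooth_fun phi"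
    and phi_hom: "\<And>c z. c > 0 \<Longrightarrow> phi (c *\<^sub>R z) = c powr (\<theta> + 1) * phi z"
    and xi_init: "\<And>x. xi x 0 = (x, 0)"
    and xi_ode: "\<And>x t. 0 \<le> t \<Longrightarrow> ereal t < T x \<Longrightarrow>
                   (xi x has_vector_derivative F (xi x t)) (at t within {0..})"
    and phi_neg: "\<And>x. x \<noteq> 0 \<Longrightarrow> phi (x, 0) < 0"
    and phi_zero: "\<And>x. x \<noteq> 0 \<Longrightarrow> \<exists>tx>0. ereal tx < T x \<and> phi (xi x tx) = 0"
    and inv: "\<And>x t. x \<in> Z \<Longrightarrow> 0 \<le> t \<Longrightarrow> ereal t < T x \<Longrightarrow>
                 phi (xi x t) \<le> 0 \<Longrightarrow> xi x t \<in> \<Xi>"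
    and \<Xi>_sub: "\<Xi> \<subseteq> ball 0 d"
    and p_ge: "p \<ge> 1" and \<epsilon>_pos: "\<epsilon> > 0"
    and h1: "\<And>z. z \<in> ball 0 d \<Longrightarrow>
               lie F phi p z \<le> (\<Sum>i<p. \<delta> i * lie F phi i z) + \<delta> p"
    and h2: "\<And>x. x \<in> Z \<Longrightarrow> \<delta> 0 * phi (x, 0) + \<delta> p \<ge> \<epsilon>"
    and h3: "\<And>i. i \<le> p \<Longrightarrow> \<delta> i \<ge> 0"
    and r_pos: "r > 0" and D_sub: "sphere 0 r \<subseteq> Z"
begin

lemma phi_cont: "continuous_on UNIV phi"
  using phi_smooth unfolding smooth_fun_def by (metis Ck.simps(1))

lemma xi_cont: "continuous_on {0..b} (xi x)" if "ereal b < T x" for b x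
proof -
  have "continuous (at t within {0..b}) (xi x)" if "t \<in> {0..b}" for t
  proof -
    have "ereal t < T x" using that \<open>ereal b < T x\<close> by (meson atLeastAtMost_iff ereal_less_eq(3) le_less_trans)
    then have "(xi x has_vector_derivative F (xi x t)) (at t within {0..b})"
      using xi_ode[of t x] that by (auto intro: has_vector_derivative_within_subset)
    then show ?thesis by (rule has_vector_derivative_continuous)
  qed
  then show ?thesis by (simp add: continuous_on_eq_continuous_within)
qed

lemma tau_props:
  assumes x: "x \<noteq> 0"
  shows "0 < tau_ev xi T phi x" "ereal (tau_ev xi T phi x) < T x"
    "phi (xi x (tau_ev xi T phi x)) = 0"
    "\<And>t. 0 \<le> t \<Longrightarrow> t < tau_ev xi T phi x \<Longrightarrow> phi (xi x t) < 0"
proof -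
  obtain tx where tx: "tx > 0" "ereal tx < T x" "phi (xi x tx) = 0" using phi_zero[OF x] by blast
  define k where "k t = phi (xi x t)" for t
  have ck: "continuous_on {0..tx} k" unfolding k_def
    using continuous_on_compose2[OF phi_cont xi_cont[OF tx(2)]] by auto
  define C where "C = {t \<in> {0..tx}. k t = 0}"
  have k0: "k 0 < 0" unfolding k_def using xi_init phi_neg[OF x] by simp
  have Cc: "closed C" unfolding C_def by (rule continuous_closed_preimage_constant[OF ck closed_atLeastAtMost])
  have Cne: "tx \<in> C" using tx unfolding C_def k_def by auto
  have Cb: "bdd_below C" unfolding C_def by (auto intro: bdd_belowI[of _ 0])
  define \<tau>0 where "\<tau>0 = Inf C"
  have \<tau>0C: "\<tau>0 \<in> C" unfolding \<tau>0_def using closed_contains_Inf[OF _ Cb Cc] Cne by auto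
  have \<tau>0le: "\<tau>0 \<le> tx" unfolding \<tau>0_def using Cne Cb by (rule cInf_lower)
  have \<tau>0pos: "\<tau>0 > 0" using \<tau>0C k0 unfolding C_def by (cases "\<tau>0 = 0") auto
  have \<tau>0T: "ereal \<tau>0 < T x" using \<tau>0le tx(2) by (meson ereal_less_eq(3) le_less_trans)
  have eq: "tau_ev xi T phi x = \<tau>0" unfolding tau_ev_def
  proof (rule cInf_eq_minimum)
    show "\<tau>0 \<in> {t. 0 < t \<and> ereal t < T x \<and> phi (xi x t) = 0}"
      using \<tau>0C \<tau>0pos \<tau>0T unfolding C_def k_def by auto
    fix z assume z: "z \<in> {t. 0 < t \<and> ereal t < T x \<and> phi (xi x t) = 0}"
    show "\<tau>0 \<le> z"
    proof (cases "z \<le> tx")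
      case True
      then have "z \<in> C" using z unfolding C_def k_def by auto
      then show ?thesis unfolding \<tau>0_def using Cb by (rule cInf_lower)
    next
      case False then show ?thesis using \<tau>0le by linarith
    qed
  qed
  show "0 < tau_ev xi T phi x" "ereal (tau_ev xi T phi x) < T x" "phi (xi x (tau_ev xi T phi x)) = 0"
    using eq \<tau>0pos \<tau>0T \<tau>0C unfolding C_def k_def by auto
  fix t assume t: "0 \<le> t" "t < tau_ev xi T phi x"
  show "phi (xi x t) < 0"
  proof (rule ccontr)
    assume "\<not> phi (xi x t) < 0"
    then have kt: "0 \<le> k t" unfolding k_def by simp
    have "continuous_on {0..t} k" using ck t eq \<tau>0le by (auto intro: continuous_on_subset)
    then obtain s where s: "0 \<le> s" "s \<le> t" "k s = 0"
      using IVT'[of k 0 0 t] k0 kt t(1) by auto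
    have "s \<noteq> 0" using s k0 by auto
    then have "s \<in> C" using s t eq \<tau>0le unfolding C_def by auto
    then have "\<tau>0 \<le> s" unfolding \<tau>0_def using Cb by (rule cInf_lower)
    then show False using s t eq by linarith
  qed
qed

lemma tau_nonpos:
  assumes "x \<noteq> 0" "0 \<le> t" "t \<le> tau_ev xi T phi x"
  shows "phi (xi x t) \<le> 0"
  using tau_props[OF assms(1)] assms(2,3) by (cases "t = tau_ev xi T phi x") (auto intro: less_imp_le)


lemma F_C1: "Ck (Suc 0) F"
  using F_smooth unfolding smooth_fun_def by blast

lemma zeta:
  assumes s: "s > 0" and t: "0 \<le> t" "ereal t < T (s *\<^sub>R y)" "ereal (s powr \<alpha> * t) < T y"
  shows "xi (s *\<^sub>R y) t = s *\<^sub>R xi y (s powr \<alpha> * t)"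
proof (rule ode_unique[OF F_C1 t(1)])
  let ?x = "s *\<^sub>R y"
  fix u assume u: "u \<in> {0..t}"
  have uT: "ereal u < T ?x" using u t(2) by (meson atLeastAtMost_iff ereal_less_eq(3) le_less_trans)
  show "(xi ?x has_vector_derivative F (xi ?x u)) (at u within {0..t})"
    using xi_ode[OF _ uT] u by (auto intro: has_vector_derivative_within_subset)
  have sa: "s powr \<alpha> > 0" using s by simp
  have suT: "ereal (s powr \<alpha> * u) < T y"
    using u t(3) sa by (meson atLeastAtMost_iff ereal_less_eq(3) le_less_trans mult_left_mono less_imp_le)
  have d1: "((\<lambda>u. s powr \<alpha> * u) has_vector_derivative s powr \<alpha>) (at u within {0..t})"
    using has_real_derivative_iff_has_vector_derivative[THEN iffD1, OF DERIV_cmult_Id]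
    by (auto intro: has_vector_derivative_at_within)
  have d2: "(xi y has_vector_derivative F (xi y (s powr \<alpha> * u))) (at (s powr \<alpha> * u) within (\<lambda>u. s powr \<alpha> * u) ` {0..t})"
    using xi_ode[OF _ suT] u sa
    by (auto intro!: has_vector_derivative_within_subset[of _ _ _ "{0..}"] simp: image_def)
  have "((xi y \<circ> (\<lambda>u. s powr \<alpha> * u)) has_vector_derivative (s powr \<alpha> *\<^sub>R F (xi y (s powr \<alpha> * u)))) (at u within {0..t})"
    by (rule vector_diff_chain_within[OF d1 d2])
  then have "((\<lambda>u. s *\<^sub>R xi y (s powr \<alpha> * u)) has_vector_derivative s *\<^sub>R (s powr \<alpha> *\<^sub>R F (xi y (s powr \<alpha> * u)))) (at u within {0..t})"
    unfolding o_def by (rule bounded_linear.has_vector_derivative[OF bounded_linear_scaleR_right])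
  moreover have "s *\<^sub>R (s powr \<alpha> *\<^sub>R F (xi y (s powr \<alpha> * u))) = F (s *\<^sub>R xi y (s powr \<alpha> * u))"
    using F_hom[OF s] s by (simp add: powr_add)
  ultimately show "((\<lambda>u. s *\<^sub>R xi y (s powr \<alpha> * u)) has_vector_derivative F (s *\<^sub>R xi y (s powr \<alpha> * u))) (at u within {0..t})"
    by simp
next
  show "xi (s *\<^sub>R y) 0 = s *\<^sub>R xi y (s powr \<alpha> * 0)" by (simp add: xi_init)
qed


definition "EA t i j = mat_exp (Suc p) (\<lambda>a b. t * Amat \<delta> p a b) i j"
definition "W x j = w0 F phi \<delta> p r x j"
definition "vv x t i = (\<Sum>j<Suc p. EA t i j * W x j)"

lemma Amat_bound: "\<bar>Amat \<delta> p i j\<bar> \<le> 1 + (\<Sum>k\<le>p. \<bar>\<delta> k\<bar>)"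
proof -
  have s0: "0 \<le> (\<Sum>k\<le>p. \<bar>\<delta> k\<bar>)" by (intro sum_nonneg) auto
  have "\<bar>\<delta> j\<bar> \<le> (\<Sum>k\<le>p. \<bar>\<delta> k\<bar>)" if "j \<le> p"
    using that by (intro member_le_sum[of j "{..p}" "\<lambda>k. \<bar>\<delta> k\<bar>"]) auto
  then show ?thesis using s0 unfolding Amat_def by auto
qed

lemma vv_deriv:
  assumes i: "i < Suc p"
  shows "((\<lambda>t. vv x t i) has_real_derivative (\<Sum>l<Suc p. Amat \<delta> p i l * vv x t l)) (at t)"
proof -
  have "((\<lambda>t. vv x t i) has_real_derivative (\<Sum>j<Suc p. (\<Sum>l<Suc p. Amat \<delta> p i l * EA t l j) * W x j)) (at t)"
    unfolding vv_def EA_def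
    by (intro DERIV_sum DERIV_cmult_right mat_exp_deriv[OF Amat_bound] i) (auto intro: sum_nonneg)
  moreover have "(\<Sum>j<Suc p. (\<Sum>l<Suc p. Amat \<delta> p i l * EA t l j) * W x j) = (\<Sum>l<Suc p. Amat \<delta> p i l * vv x t l)"
    unfolding vv_def by (simp only: sum_distrib_left sum_distrib_right mult.assoc) (rule sum.swap)
  ultimately show ?thesis by simp
qed

lemma row_mid: "i + 1 < p \<Longrightarrow> (\<Sum>l<Suc p. Amat \<delta> p i l * v l) = v (i + 1)"
proof -
  assume ip: "i + 1 < p"
  have "(\<lambda>l. Amat \<delta> p i l * v l) = (\<lambda>l. if l = i + 1 then v l else 0)"
    using ip unfolding Amat_def by (auto simp: fun_eq_iff)
  then show ?thesis using ip by (simp only:) (simp add: sum.delta)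
qed

lemma row_last: "(\<Sum>l<Suc p. Amat \<delta> p (p - 1) l * v l) = (\<Sum>l<p. \<delta> l * v l) + v p"
proof -
  have "(\<Sum>l<Suc p. Amat \<delta> p (p - 1) l * v l) = (\<Sum>l<p. Amat \<delta> p (p - 1) l * v l) + Amat \<delta> p (p - 1) p * v p"
    by simp
  also have "(\<Sum>l<p. Amat \<delta> p (p - 1) l * v l) = (\<Sum>l<p. \<delta> l * v l)"
    using p_ge by (intro sum.cong refl) (auto simp: Amat_def)
  also have "Amat \<delta> p (p - 1) p = 1" using p_ge by (auto simp: Amat_def)
  finally show ?thesis by simp
qed

lemma row_p: "(\<Sum>l<Suc p. Amat \<delta> p p l * v l) = 0"
  by (simp add: Amat_def)

lemma vv_zero: "i < Suc p \<Longrightarrow> vv x 0 i = W x i"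
proof -
  assume i: "i < Suc p"
  have "(\<lambda>j. EA 0 i j * W x j) = (\<lambda>j. if j = i then W x j else 0)"
    unfolding EA_def using mat_exp_zero[of "Suc p" "Amat \<delta> p"] by (auto simp: fun_eq_iff)
  then show ?thesis unfolding vv_def using i by (simp only:) (simp add: sum.delta)
qed

lemma W_p: "W x p = \<delta> p"
  using p_ge by (simp add: W_def w0_def Let_def)

lemma vv_p: "vv x t p = \<delta> p"
proof -
  have "\<forall>t. ((\<lambda>t. vv x t p) has_real_derivative 0) (at t)"
    using vv_deriv[of p x] row_p by simp
  then have "vv x t p = vv x 0 p" by (rule DERIV_isconst_all)
  then show ?thesis by (simp add: vv_zero W_p)
qed

lemma mu_eq: "mu F phi \<alpha> \<theta> \<delta> p r x t = (norm x / r) powr (\<theta> + 1) * vv x ((norm x / r) powr \<alpha> * t) 0"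
  unfolding mu_def vv_def EA_def W_def Let_def by (simp add: lessThan_Suc_atMost)

lemma W_scale: "c > 0 \<Longrightarrow> W (c *\<^sub>R x) = W x"
proof -
  assume c: "c > 0"
  have "(r / norm (c *\<^sub>R x)) *\<^sub>R (c *\<^sub>R x) = (r / norm x) *\<^sub>R x"
    using c by (cases "x = 0") (auto simp: field_simps)
  then show ?thesis unfolding W_def w0_def by (simp only:)
qed

lemma mu_scale:
  assumes c: "c > 0"
  shows "mu F phi \<alpha> \<theta> \<delta> p r (c *\<^sub>R x) t = c powr (\<theta> + 1) * mu F phi \<alpha> \<theta> \<delta> p r x (c powr \<alpha> * t)"
proof -
  have n: "norm (c *\<^sub>R x) / r = c * (norm x / r)" using c by simp
  have vs: "vv (c *\<^sub>R x) = vv x" unfolding vv_def[abs_def] W_scale[OF c] ..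
  have pm: "(c * (norm x / r)) powr q = c powr q * (norm x / r) powr q" for q
    using c r_pos powr_mult[of c "norm x / r" q] by simp
  show ?thesis by (simp only: mu_eq n vs pm mult.assoc mult.left_commute)
qed


lemma y_sphere: "norm y = r \<Longrightarrow> (r / norm y) *\<^sub>R y = y"
  using r_pos by simp

lemma W_sphere0: "norm y = r \<Longrightarrow> W y 0 = phi (y, 0)"
  unfolding W_def w0_def Let_def y_sphere by (simp add: y_sphere)

lemma W_sphere: "norm y = r \<Longrightarrow> 0 < i \<Longrightarrow> i < p \<Longrightarrow> W y i = max (lie F phi i (y, 0)) 0"
  unfolding W_def w0_def Let_def using r_pos by (simp add: y_sphere)

lemma mu_sphere: "norm y = r \<Longrightarrow> mu F phi \<alpha> \<theta> \<delta> p r y t = vv y t 0"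
  unfolding mu_eq using r_pos by simp

definition "cc y i t = (if i = 0 then phi (y, 0) else 0) + \<epsilon> * t ^ (p - i) / fact (p - i)"

lemma cc_deriv:
  assumes "i < p"
  shows "((\<lambda>t. cc y i t) has_real_derivative \<epsilon> * t ^ (p - i - 1) / fact (p - i - 1)) (at t)"
proof -
  obtain m where m: "p - i = Suc m" using assms by (metis Suc_diff_Suc)
  have "p - i - 1 = m" using m by simp
  moreover have "((\<lambda>t. cc y i t) has_real_derivative \<epsilon> * (real (Suc m) * t ^ m) / fact (Suc m)) (at t)"
  proof -
    have "((\<lambda>t. t ^ Suc m) has_real_derivative real (Suc m) * t ^ m) (at t)"
      using DERIV_pow[of "Suc m" t] by simp
    then have "((\<lambda>t. (if i = 0 then phi (y, 0) else 0) + \<epsilon> * t ^ Suc m / fact (Suc m)) has_real_derivative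
        0 + \<epsilon> * (real (Suc m) * t ^ m) / fact (Suc m)) (at t)"
      by (intro DERIV_add DERIV_const DERIV_cdivide DERIV_cmult)
    then show ?thesis unfolding cc_def m by simp
  qed
  moreover have "\<epsilon> * (real (Suc m) * t ^ m) / fact (Suc m) = \<epsilon> * t ^ m / fact m"
    by (simp add: field_simps del: of_nat_Suc)
  ultimately show ?thesis by simp
qed

lemma lower:
  assumes y: "norm y = r" and t: "0 \<le> t" and i: "i < p"
  shows "vv y t i \<ge> cc y i t"
proof -
  have yZ: "y \<in> Z" using D_sub y by auto
  define e where "e i t = vv y t i - cc y i t" for i t
  define e' where "e' i t = (\<Sum>l<Suc p. Amat \<delta> p i l * vv y t l) - \<epsilon> * t ^ (p - i - 1) / fact (p - i - 1)" for i t
  have "e i t \<ge> 0"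
  proof (rule comparison[where e=e and e'=e' and \<delta>=\<delta> and p=p and \<tau>=t, OF p_ge _ _ _ _ _ i])
    show "t \<in> {0..t}" using t by simp
    fix i s assume i: "i < p"
    show "(e i has_real_derivative e' i s) (at s within {0..t})"
      unfolding e_def[abs_def] e'_def
      by (intro DERIV_diff vv_deriv cc_deriv i has_field_derivative_at_within) (use i in auto)
  next
    fix i s assume i: "i + 1 < p"
    show "e' i s = e (i + 1) s"
      unfolding e_def e'_def cc_def row_mid[OF i] by (simp add: diff_diff_add)
  next
    fix s assume s: "s \<in> {0..t}"
    have "(\<Sum>j<p. \<delta> j * cc y j s) = (\<Sum>j<p. \<delta> j * (if j = 0 then phi (y, 0) else 0)) + (\<Sum>j<p. \<delta> j * (\<epsilon> * s ^ (p - j) / fact (p - j)))"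
      unfolding cc_def by (simp add: sum.distrib distrib_left)
    also have "(\<Sum>j<p. \<delta> j * (if j = 0 then phi (y, 0) else 0)) = \<delta> 0 * phi (y, 0)"
    proof -
      have "(\<lambda>j. \<delta> j * (if j = 0 then phi (y, 0) else 0)) = (\<lambda>j. if j = 0 then \<delta> j * phi (y, 0) else 0)" by auto
      then show ?thesis using p_ge by (simp only:) (simp add: sum.delta)
    qed
    finally have "(\<Sum>j<p. \<delta> j * cc y j s) \<ge> \<delta> 0 * phi (y, 0)"
      using s h3 \<epsilon>_pos by (smt (verit) sum_nonneg atLeastAtMost_iff divide_nonneg_pos fact_gt_zero less_imp_le
          lessThan_iff mult_nonneg_nonneg zero_le_power)
    then have "(\<Sum>j<p. \<delta> j * cc y j s) + \<delta> p - \<epsilon> \<ge> 0" using h2[OF yZ] by linarith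
    moreover have "(\<Sum>j<p. \<delta> j * e j s) = (\<Sum>j<p. \<delta> j * vv y s j) - (\<Sum>j<p. \<delta> j * cc y j s)"
      unfolding e_def by (simp add: sum_subtractf right_diff_distrib)
    moreover have "e' (p - 1) s = (\<Sum>j<p. \<delta> j * vv y s j) + \<delta> p - \<epsilon>"
      unfolding e'_def row_last vv_p using p_ge by simp
    ultimately show "(\<Sum>j<p. \<delta> j * e j s) \<le> e' (p - 1) s" by linarith
  next
    fix j assume "j < p" then show "0 \<le> \<delta> j" using h3 by simp
  next
    fix i assume i: "i < p"
    show "0 \<le> e i 0"
    proof (cases "i = 0")
      case True
      have "(0::real) ^ p = 0" using p_ge by simp
      then show ?thesis unfolding e_def cc_def using p_ge True by (simp add: vv_zero W_sphere0[OF y] power_0_left)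
    next
      case False
      then show ?thesis unfolding e_def cc_def using i by (simp add: vv_zero W_sphere[OF y] power_0_left)
    qed
  qed
  then show ?thesis unfolding e_def by simp
qed


lemma g_deriv_pos:
  assumes y: "norm y = r" and t: "0 < t"
  shows "\<exists>D. ((\<lambda>t. vv y t 0) has_real_derivative D) (at t) \<and> D > 0"
proof -
  have yZ: "y \<in> Z" using D_sub y by auto
  have d: "((\<lambda>t. vv y t 0) has_real_derivative (\<Sum>l<Suc p. Amat \<delta> p 0 l * vv y t l)) (at t)"
    by (rule vv_deriv) simp
  show ?thesis
  proof (cases "1 < p")
    case True
    then have "(\<Sum>l<Suc p. Amat \<delta> p 0 l * vv y t l) = vv y t 1" using row_mid[of 0] by simp
    moreover have "vv y t 1 \<ge> cc y 1 t" using lower[OF y _ True] t by simp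
    moreover have "cc y 1 t > 0" unfolding cc_def using t \<epsilon>_pos by simp
    ultimately show ?thesis using d by auto
  next
    case False
    then have p1: "p = 1" using p_ge by simp
    have pm: "p - 1 = 0" and pset: "{..<p} = {0}" using p1 by auto
    have "(\<Sum>l<Suc p. Amat \<delta> p 0 l * vv y t l) = \<delta> 0 * vv y t 0 + \<delta> p"
      using row_last[of "\<lambda>l. vv y t l"] unfolding pm pset by (simp add: vv_p)
    moreover have "cc y 0 t \<ge> phi (y, 0)" unfolding cc_def using t \<epsilon>_pos by simp
    then have "vv y t 0 \<ge> phi (y, 0)"
      using lower[OF y _, of t 0] t p_ge by simp
    then have "\<delta> 0 * vv y t 0 \<ge> \<delta> 0 * phi (y, 0)" using h3[of 0] by (simp add: mult_left_mono)
    ultimately have "(\<Sum>l<Suc p. Amat \<delta> p 0 l * vv y t l) \<ge> \<epsilon>" using h2[OF yZ] by simp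
    then show ?thesis using d \<epsilon>_pos by (intro exI[of _ "(\<Sum>l<Suc p. Amat \<delta> p 0 l * vv y t l)"]) auto
  qed
qed

lemma g_cont: "continuous_on S (\<lambda>t. vv y t 0)"
  by (rule DERIV_continuous_on, rule has_field_derivative_at_within, rule vv_deriv) simp

lemma g_incr:
  assumes y: "norm y = r" and ab: "0 \<le> a" "a < b"
  shows "vv y a 0 < vv y b 0"
  by (rule DERIV_pos_imp_increasing_open[OF ab(2) _ g_cont]) (use g_deriv_pos[OF y] ab in auto)

lemma g_root:
  assumes y: "norm y = r"
  shows "\<exists>t0\<ge>0. vv y t0 0 = 0"
proof -
  have y0: "y \<noteq> 0" using y r_pos by auto
  define \<phi>0 where "\<phi>0 = phi (y, 0)"
  have neg: "\<phi>0 < 0" unfolding \<phi>0_def using phi_neg[OF y0] .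
  define T0 where "T0 = max 1 (- \<phi>0 * fact p / \<epsilon>)"
  have T01: "T0 \<ge> 1" unfolding T0_def by simp
  have "T0 ^ 1 \<le> T0 ^ p" using T01 p_ge by (intro power_increasing) auto
  then have Tp: "T0 \<le> T0 ^ p" by simp
  have "- \<phi>0 * fact p / \<epsilon> \<le> T0" unfolding T0_def by simp
  then have "- \<phi>0 * fact p \<le> \<epsilon> * T0" using \<epsilon>_pos by (simp add: field_simps)
  then have "- \<phi>0 \<le> \<epsilon> * T0 / fact p" by (simp add: field_simps)
  also have "\<dots> \<le> \<epsilon> * T0 ^ p / fact p"
    using Tp \<epsilon>_pos by (intro divide_right_mono mult_left_mono) auto
  finally have "0 \<le> \<phi>0 + \<epsilon> * T0 ^ p / fact p" by simp
  also have "\<dots> = cc y 0 T0" unfolding cc_def \<phi>0_def by simp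
  also have "\<dots> \<le> vv y T0 0" using lower[OF y _ , of T0 0] T01 p_ge by simp
  finally have hi: "0 \<le> vv y T0 0" .
  have lo: "vv y 0 0 \<le> 0" using vv_zero[of 0 y] W_sphere0[OF y] neg unfolding \<phi>0_def by simp
  obtain t0 where "0 \<le> t0" "t0 \<le> T0" "vv y t0 0 = 0"
    using IVT'[of "\<lambda>t. vv y t 0" 0 0 T0, OF lo hi _ g_cont] T01 by auto
  then show ?thesis by blast
qed

lemma x_decomp:
  assumes x: "x \<noteq> 0"
  defines "s \<equiv> norm x / r" and "y \<equiv> (r / norm x) *\<^sub>R x"
  shows "s > 0" "norm y = r" "s *\<^sub>R y = x"
    "\<And>t. mu F phi \<alpha> \<theta> \<delta> p r x t = s powr (\<theta> + 1) * vv y (s powr \<alpha> * t) 0"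
proof -
  show s: "s > 0" unfolding s_def using x r_pos by simp
  show ny: "norm y = r" unfolding y_def using x r_pos by simp
  show sy: "s *\<^sub>R y = x" unfolding s_def y_def using x r_pos by simp
  fix t
  have "mu F phi \<alpha> \<theta> \<delta> p r x t = mu F phi \<alpha> \<theta> \<delta> p r (s *\<^sub>R y) t" using sy by simp
  also have "\<dots> = s powr (\<theta> + 1) * mu F phi \<alpha> \<theta> \<delta> p r y (s powr \<alpha> * t)" by (rule mu_scale[OF s])
  also have "\<dots> = s powr (\<theta> + 1) * vv y (s powr \<alpha> * t) 0" using mu_sphere[OF ny] by simp
  finally show "mu F phi \<alpha> \<theta> \<delta> p r x t = s powr (\<theta> + 1) * vv y (s powr \<alpha> * t) 0" .
qed

lemma part_a:
  assumes x: "x \<noteq> 0"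
  shows "mu F phi \<alpha> \<theta> \<delta> p r x 0 < 0"
proof -
  let ?s = "norm x / r" and ?y = "(r / norm x) *\<^sub>R x"
  note xd = x_decomp[OF x]
  have "?y \<noteq> 0" using xd(2) r_pos by auto
  then have "vv ?y 0 0 < 0" using vv_zero[of 0 ?y] W_sphere0[OF xd(2)] phi_neg by simp
  moreover have "?s powr (\<theta> + 1) > 0" using x r_pos by simp
  ultimately show ?thesis unfolding xd(4) by (simp add: mult_pos_neg)
qed

lemma part_d:
  assumes x: "x \<noteq> 0"
  shows "\<exists>!\<tau>. \<tau> \<ge> 0 \<and> mu F phi \<alpha> \<theta> \<delta> p r x \<tau> = 0"
proof -
  let ?s = "norm x / r" and ?y = "(r / norm x) *\<^sub>R x"
  note xd = x_decomp[OF x]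
  have sa: "?s powr \<alpha> > 0" using x r_pos by simp
  have sb: "?s powr (\<theta> + 1) > 0" using x r_pos by simp
  obtain t0 where t0: "t0 \<ge> 0" "vv ?y t0 0 = 0" using g_root[OF xd(2)] by blast
  have inj: "a = b" if "a \<ge> 0" "b \<ge> 0" "vv ?y a 0 = 0" "vv ?y b 0 = 0" for a b
    using g_incr[OF xd(2), of a b] g_incr[OF xd(2), of b a] that by (cases a b rule: linorder_cases) auto
  show ?thesis
  proof (rule ex1I[of _ "t0 / ?s powr \<alpha>"])
    show "t0 / ?s powr \<alpha> \<ge> 0 \<and> mu F phi \<alpha> \<theta> \<delta> p r x (t0 / ?s powr \<alpha>) = 0"
      using t0 sa unfolding xd(4) by simp
    fix \<tau> assume \<tau>: "\<tau> \<ge> 0 \<and> mu F phi \<alpha> \<theta> \<delta> p r x \<tau> = 0"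
    then have "vv ?y (?s powr \<alpha> * \<tau>) 0 = 0" using sb unfolding xd(4) by simp
    then have "?s powr \<alpha> * \<tau> = t0" using inj[of "?s powr \<alpha> * \<tau>" t0] \<tau> sa t0 by simp
    then show "\<tau> = t0 / ?s powr \<alpha>" using sa by (simp add: field_simps)
  qed
qed


lemma ereal_lt: "a \<le> b \<Longrightarrow> ereal b < X \<Longrightarrow> ereal a < X"
  by (meson ereal_less_eq(3) le_less_trans)

lemma sphere_b:
  assumes y: "norm y = r" and t: "0 \<le> t" "t \<le> tau_ev xi T phi y"
  shows "phi (xi y t) \<le> vv y t 0"
proof -
  have y0: "y \<noteq> 0" using y r_pos by auto
  have yZ: "y \<in> Z" using D_sub y by auto
  define \<tau> where "\<tau> = tau_ev xi T phi y"
  have \<tau>T: "ereal \<tau> < T y" unfolding \<tau>_def using tau_props(2)[OF y0] .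
  define e where "e i t = vv y t i - lie F phi i (xi y t)" for i t
  define e' where "e' i t = (\<Sum>l<Suc p. Amat \<delta> p i l * vv y t l) - lie F phi (Suc i) (xi y t)" for i t
  have lie_d: "((\<lambda>t. lie F phi i (xi y t)) has_real_derivative lie F phi (Suc i) (xi y s)) (at s within {0..\<tau>})"
    if s: "s \<in> {0..\<tau>}" for i s
  proof -
    have sT: "ereal s < T y" using s \<tau>T by (auto intro: ereal_lt)
    have dx: "(xi y has_vector_derivative F (xi y s)) (at s within {0..\<tau>})"
      using xi_ode[OF _ sT] s by (auto intro: has_vector_derivative_within_subset)
    have dl: "(lie F phi i has_derivative frechet_derivative (lie F phi i) (at (xi y s))) (at (xi y s) within xi y ` {0..\<tau>})"
      using lie_diff[OF F_smooth phi_smooth, of i "xi y s", unfolded frechet_derivative_works]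
      by (rule has_derivative_at_withinI)
    have "((lie F phi i \<circ> xi y) has_vector_derivative frechet_derivative (lie F phi i) (at (xi y s)) (F (xi y s))) (at s within {0..\<tau>})"
      by (rule vector_derivative_diff_chain_within[OF dx dl])
    then show ?thesis unfolding has_real_derivative_iff_has_vector_derivative o_def by simp
  qed
  have "e 0 t \<ge> 0"
  proof (rule comparison[where e=e and e'=e' and \<delta>=\<delta> and p=p and \<tau>=\<tau>, OF p_ge])
    show "0 < p" using p_ge by simp
    show "t \<in> {0..\<tau>}" using t unfolding \<tau>_def by simp
    fix i s assume i: "i < p" and s: "s \<in> {0..\<tau>}"
    show "(e i has_real_derivative e' i s) (at s within {0..\<tau>})"
      unfolding e_def[abs_def] e'_def
    proof (rule DERIV_diff)
      show "((\<lambda>t. vv y t i) has_real_derivative (\<Sum>l<Suc p. Amat \<delta> p i l * vv y s l)) (at s within {0..\<tau>})"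
        using i by (intro has_field_derivative_at_within[OF vv_deriv]) auto
      show "((\<lambda>t. lie F phi i (xi y t)) has_real_derivative lie F phi (Suc i) (xi y s)) (at s within {0..\<tau>})"
        by (rule lie_d[OF s])
    qed
  next
    fix i s assume i: "i + 1 < p"
    show "e' i s = e (i + 1) s"
      unfolding e_def e'_def row_mid[OF i] by simp
  next
    fix s assume s: "s \<in> {0..\<tau>}"
    have "phi (xi y s) \<le> 0" using tau_nonpos[OF y0] s unfolding \<tau>_def by auto
    then have "xi y s \<in> \<Xi>" using inv[OF yZ] s \<tau>T by (auto intro: ereal_lt)
    then have "xi y s \<in> ball 0 d" using \<Xi>_sub by auto
    note h = h1[OF this]
    have "(\<Sum>j<p. \<delta> j * e j s) = (\<Sum>j<p. \<delta> j * vv y s j) - (\<Sum>j<p. \<delta> j * lie F phi j (xi y s))"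
      unfolding e_def by (simp add: sum_subtractf right_diff_distrib)
    moreover have "e' (p - 1) s = (\<Sum>j<p. \<delta> j * vv y s j) + \<delta> p - lie F phi p (xi y s)"
      unfolding e'_def row_last vv_p using p_ge by simp
    ultimately show "(\<Sum>j<p. \<delta> j * e j s) \<le> e' (p - 1) s" using h by linarith
  next
    fix j assume "j < p" then show "0 \<le> \<delta> j" using h3 by simp
  next
    fix i assume i: "i < p"
    show "0 \<le> e i 0"
    proof (cases "i = 0")
      case True
      then show ?thesis unfolding e_def using p_ge by (simp add: vv_zero W_sphere0[OF y] xi_init)
    next
      case False
      then show ?thesis unfolding e_def using i by (simp add: vv_zero W_sphere[OF y] xi_init)
    qed
  qed
  then show ?thesis unfolding e_def by simp
qed

lemma part_b:
  assumes x: "x \<noteq> 0" and t: "0 \<le> t" "t \<le> tau_ev xi T phi x"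
  shows "phi (xi x t) \<le> mu F phi \<alpha> \<theta> \<delta> p r x t"
proof -
  define s where "s = norm x / r"
  define y where "y = (r / norm x) *\<^sub>R x"
  note xd = x_decomp[OF x, folded s_def y_def]
  define \<sigma> where "\<sigma> = s powr \<alpha>"
  have \<sigma>: "\<sigma> > 0" unfolding \<sigma>_def using xd(1) by simp
  have y0: "y \<noteq> 0" using xd(2) r_pos by auto
  note tx = tau_props[OF x] and ty = tau_props[OF y0]
  define \<tau>x where "\<tau>x = tau_ev xi T phi x"
  define \<tau>y where "\<tau>y = tau_ev xi T phi y"
  have le: "\<sigma> * \<tau>x \<le> \<tau>y"
  proof (rule ccontr)
    assume "\<not> \<sigma> * \<tau>x \<le> \<tau>y"
    then have m: "\<tau>y / \<sigma> < \<tau>x" using \<sigma> by (simp add: field_simps)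
    define m where "m = \<tau>y / \<sigma>"
    have m0: "0 \<le> m" unfolding m_def using ty(1) \<sigma> \<tau>y_def by simp
    have mT: "ereal m < T (s *\<^sub>R y)" using xd(3) tx(2) m unfolding m_def \<tau>x_def
      by (auto intro: ereal_lt less_imp_le)
    have sm: "s powr \<alpha> * m = \<tau>y" unfolding m_def \<sigma>_def[symmetric] using \<sigma> by simp
    have "xi (s *\<^sub>R y) m = s *\<^sub>R xi y (s powr \<alpha> * m)"
      by (rule zeta[OF xd(1) m0 mT]) (use sm ty(2) \<tau>y_def in simp)
    then have "phi (xi x m) = s powr (\<theta> + 1) * phi (xi y \<tau>y)"
      using xd(3) sm phi_hom[OF xd(1)] by simp
    also have "\<dots> = 0" using ty(3) \<tau>y_def by simp
    finally have "phi (xi x m) = 0" .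
    moreover have "phi (xi x m) < 0" using tx(4)[OF m0] m unfolding m_def \<tau>x_def by simp
    ultimately show False by simp
  qed
  have tT: "ereal t < T (s *\<^sub>R y)" using t tx(2) xd(3) by (auto intro: ereal_lt)
  have st: "\<sigma> * t \<le> \<tau>y" using le t \<sigma> unfolding \<tau>x_def by (meson mult_left_mono less_imp_le order_trans)
  have stT: "ereal (s powr \<alpha> * t) < T y" using st ty(2) unfolding \<sigma>_def \<tau>y_def by (auto intro: ereal_lt)
  have "xi x t = s *\<^sub>R xi y (s powr \<alpha> * t)" using zeta[OF xd(1) t(1) tT stT] xd(3) by simp
  then have "phi (xi x t) = s powr (\<theta> + 1) * phi (xi y (\<sigma> * t))"
    using phi_hom[OF xd(1)] unfolding \<sigma>_def by simp
  also have "\<dots> \<le> s powr (\<theta> + 1) * vv y (\<sigma> * t) 0"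
    using sphere_b[OF xd(2), of "\<sigma> * t"] st \<sigma> t(1) unfolding \<tau>y_def
    by (intro mult_left_mono) auto
  also have "\<dots> = mu F phi \<alpha> \<theta> \<delta> p r x t" using xd(4) unfolding \<sigma>_def by simp
  finally show ?thesis .
qed

end

theorem theorem3:
  fixes f :: "real^'n \<Rightarrow> real^'m \<Rightarrow> real^'n"
    and u :: "real^'n \<Rightarrow> real^'m"
    and phi :: "((real^'n) \<times> (real^'n)) \<Rightarrow> real"
    and \<alpha> \<theta> :: real
    and xi :: "real^'n \<Rightarrow> real \<Rightarrow> ((real^'n) \<times> (real^'n))"
    and T :: "real^'n \<Rightarrow> ereal"
    and Z :: "(real^'n) set"
    and \<Xi> :: "((real^'n) \<times> (real^'n)) set"
    and d \<epsilon> r :: real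
    and p :: nat
    and \<delta> :: "nat \<Rightarrow> real"
  defines "F \<equiv> Fvf f u"
  assumes F_smooth: "smooth_fun F"
    and \<alpha>_ge: "\<alpha> \<ge> 1"
    and F_hom: "\<And>c z. c > 0 \<Longrightarrow> F (c *\<^sub>R z) = c powr (\<alpha> + 1) *\<^sub>R F z"
    and phi_smooth: "smooth_fun phi"
    and \<theta>_ge: "\<theta> \<ge> 1"
    and phi_hom: "\<And>c z. c > 0 \<Longrightarrow> phi (c *\<^sub>R z) = c powr (\<theta> + 1) * phi z"
    (* xi(.;x) is the solution of  d/dt xi = F(xi), xi(0) = (x,0), on [0, T x) *)
    and T_pos: "\<And>x. T x > 0"
    and xi_init: "\<And>x. xi x 0 = (x, 0)"
    and xi_ode: "\<And>x t. 0 \<le> t \<Longrightarrow> ereal t < T x \<Longrightarrow>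
                   (xi x has_vector_derivative F (xi x t)) (at t within {0..})"
    (* standing assumption (iii) *)
    and phi_neg: "\<And>x. x \<noteq> 0 \<Longrightarrow> phi (x, 0) < 0"
    and phi_zero: "\<And>x. x \<noteq> 0 \<Longrightarrow> \<exists>tx>0. ereal tx < T x \<and> phi (xi x tx) = 0"
    (* standing assumption (iv) *)
    and Z_compact: "compact Z" and Z_nbhd: "\<exists>e>0. ball 0 e \<subseteq> Z"
    and \<Xi>_compact: "compact \<Xi>" and \<Xi>_nbhd: "\<exists>e>0. ball 0 e \<subseteq> \<Xi>"
    and inv: "\<And>x t. x \<in> Z \<Longrightarrow> 0 \<le> t \<Longrightarrow> ereal t < T x \<Longrightarrow>
                 phi (xi x t) \<le> 0 \<Longrightarrow> xi x t \<in> \<Xi>"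
    (* standing assumption (v) *)
    and equil: "\<And>\<zeta>. f \<zeta> (u \<zeta>) = 0 \<longleftrightarrow> \<zeta> = 0"
    (* hypotheses of the theorem *)
    and d_pos: "d > 0" and \<Xi>_sub: "\<Xi> \<subseteq> ball 0 d"
    and p_ge: "p \<ge> 1" and \<epsilon>_pos: "\<epsilon> > 0"
    and h1: "\<And>z. z \<in> ball 0 d \<Longrightarrow>
               lie F phi p z \<le> (\<Sum>i<p. \<delta> i * lie F phi i z) + \<delta> p"
    and h2: "\<And>x. x \<in> Z \<Longrightarrow> \<delta> 0 * phi (x, 0) + \<delta> p \<ge> \<epsilon>"
    and h3: "\<And>i. i \<le> p \<Longrightarrow> \<delta> i \<ge> 0"
    and r_pos: "r > 0" and D_sub: "sphere 0 r \<subseteq> Z"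
  shows "(\<forall>x. x \<noteq> 0 \<longrightarrow> mu F phi \<alpha> \<theta> \<delta> p r x 0 < 0)
       \<and> (\<forall>x t. x \<noteq> 0 \<longrightarrow> 0 \<le> t \<longrightarrow> t \<le> tau_ev xi T phi x \<longrightarrow>
              mu F phi \<alpha> \<theta> \<delta> p r x t \<ge> phi (xi x t))
       \<and> (\<forall>x t c. x \<noteq> 0 \<longrightarrow> t > 0 \<longrightarrow> c > 0 \<longrightarrow>
              mu F phi \<alpha> \<theta> \<delta> p r (c *\<^sub>R x) t
                = c powr (\<theta> + 1) * mu F phi \<alpha> \<theta> \<delta> p r x (c powr \<alpha> * t))
       \<and> (\<forall>x. x \<noteq> 0 \<longrightarrow> (\<exists>!\<tau>. \<tau> \<ge> 0 \<and> mu F phi \<alpha> \<theta> \<delta> p r x \<tau> = 0))"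
proof -
  interpret setting F phi \<alpha> \<theta> xi T Z \<Xi> d \<epsilon> r p \<delta>
    by (unfold_locales) (use assms in auto)
  show ?thesis
    using part_a part_b part_d mu_scale by blast
qed

end
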